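(* In the 1-sided False Negative regime, the following Naive algorithm finds a realized spanning tree while performing $O(m\log n)$ queries in expectation: proceed in rounds, in each round querying every one of the $m$ edges of the moldgraph once, and stop as soon as the edges that have received a ``Yes'' answer contain a spanning tree (which is then output).
   Context: Problem (graph connectivity with noisy queries): a graph $G=(V,E)$, the moldgraph, with $n$ vertices and $m$ edges is given. An adversary selects an arbitrary connected spanning subgraph of $G$ to be realized. The algorithm may query an oracle on any edge $e$ (``Is $e$ realized?''), receiving ``Yes''/``No''; each query costs $1$; answers to distinct queries (including repeated queries of the same edge) are independent. Goal: output a spanning tree of $G$ all of whose edges are realized. In the 1-sided False Negative regime: for a non-realized edge the answer is always ``No''; for a realized edge the answer is ``No'' with a constant probability $p<1/2$ and ``Yes'' with probability $1-p$. *)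

theory Defs
  imports "HOL-Probability.Probability"
begin

definition graph :: "'a set \<Rightarrow> 'a set set \<Rightarrow> bool" where
  "graph V E \<longleftrightarrow> finite V \<and> E \<subseteq> {e. e \<subseteq> V \<and> card e = 2}"

definition edge_rel :: "'a set set \<Rightarrow> ('a \<times> 'a) set" where
  "edge_rel F = {(x, y). {x, y} \<in> F}"

definition connected_on :: "'a set \<Rightarrow> 'a set set \<Rightarrow> bool" where
  "connected_on V F \<longleftrightarrow> (\<forall>u\<in>V. \<forall>v\<in>V. (u, v) \<in> (edge_rel F)\<^sup>*)"

definition spanning_tree :: "'a set \<Rightarrow> 'a set set \<Rightarrow> bool" where
  "spanning_tree V T \<longleftrightarrow> finite T \<and> T \<subseteq> {e. e \<subseteq> V \<and> card e = 2}
      \<and> connected_on V T \<and> card T = card V - 1"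

text \<open>Distribution of the answers of one round of the Naive algorithm (each edge of E
  queried once): a realized edge answers Yes (True) with probability 1-p, a non-realized
  edge always answers No; answers are independent.\<close>
definition round_pmf :: "'a set set \<Rightarrow> 'a set set \<Rightarrow> real \<Rightarrow> ('a set \<Rightarrow> bool) pmf" where
  "round_pmf E R p = Pi_pmf E False
      (\<lambda>e. if e \<in> R then bernoulli_pmf (1 - p) else return_pmf False)"

text \<open>Probability space: an infinite i.i.d. sequence of rounds (rounds indexed from 0).\<close>
definition naive_space :: "'a set set \<Rightarrow> 'a set set \<Rightarrow> real \<Rightarrow> ('a set \<Rightarrow> bool) stream measure" where
  "naive_space E R p = stream_space (measure_pmf (round_pmf E R p))"

definition yes_edges :: "'a set set \<Rightarrow> ('a set \<Rightarrow> bool) stream \<Rightarrow> nat \<Rightarrow> 'a set set" where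
  "yes_edges E \<omega> t = {e \<in> E. \<exists>i\<le>t. snth \<omega> i e}"

definition stop_round :: "'a set \<Rightarrow> 'a set set \<Rightarrow> ('a set \<Rightarrow> bool) stream \<Rightarrow> nat" where
  "stop_round V E \<omega> = (LEAST t. \<exists>T \<subseteq> yes_edges E \<omega> t. spanning_tree V T)"

definition naive_queries :: "'a set \<Rightarrow> 'a set set \<Rightarrow> ('a set \<Rightarrow> bool) stream \<Rightarrow> nat" where
  "naive_queries V E \<omega> = card E * (stop_round V E \<omega> + 1)"

end

theory Submission
  imports Defs
begin

lemma ind_meas_gen:
  fixes q :: "'x pmf" and Q :: "'x \<Rightarrow> bool"
  shows "(\<lambda>\<omega>. indicator {\<omega>. \<forall>i<t. Q (\<omega> !! i)} \<omega> :: ennreal) \<in> borel_measurable (stream_space (measure_pmf q))"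
proof -
  have sp: "space (stream_space (measure_pmf q)) = UNIV" by (simp add: space_stream_space)
  have snth_m: "(\<lambda>\<omega>. \<omega> !! i) \<in> measurable (stream_space (measure_pmf q)) (measure_pmf q)" for i
    by (rule measurable_snth)
  have one: "{\<omega>. Q (\<omega> !! i)} \<in> sets (stream_space (measure_pmf q))" for i
  proof -
    have "(\<lambda>\<omega>. \<omega> !! i) -` {x. Q x} \<inter> space (stream_space (measure_pmf q)) \<in> sets (stream_space (measure_pmf q))"
      by (rule measurable_sets[OF snth_m]) simp
    moreover have "(\<lambda>\<omega>. \<omega> !! i) -` {x. Q x} \<inter> space (stream_space (measure_pmf q)) = {\<omega>. Q (\<omega> !! i)}"
      unfolding sp by blast
    ultimately show ?thesis by simp
  qed
  have "{\<omega>. \<forall>i<t. Q (\<omega> !! i)} \<in> sets (stream_space (measure_pmf q))"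
  proof (induction t)
    case 0
    have e0: "{\<omega>. \<forall>i<(0::nat). Q (\<omega> !! i)} = space (stream_space (measure_pmf q))" unfolding sp by simp
    show ?case unfolding e0 by (rule sets.top)
  next
    case (Suc t)
    have eq: "{\<omega>. \<forall>i<Suc t. Q (\<omega> !! i)} = {\<omega>. \<forall>i<t. Q (\<omega> !! i)} \<inter> {\<omega>. Q (\<omega> !! t)}"
      by (auto simp: less_Suc_eq)
    show ?case unfolding eq by (rule sets.Int[OF Suc one])
  qed
  then show ?thesis by (rule borel_measurable_indicator)
qed

lemma stream_tail:
  fixes q :: "'x pmf" and Q :: "'x \<Rightarrow> bool"
  shows "(\<integral>\<^sup>+\<omega>. indicator {\<omega>. \<forall>i<t. Q (\<omega> !! i)} \<omega> \<partial>stream_space (measure_pmf q))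
        = emeasure (measure_pmf q) {x. Q x} ^ t"
proof (induction t)
  case 0
  interpret S: prob_space "stream_space (measure_pmf q)"
    by (rule prob_space.prob_space_stream_space[OF prob_space_measure_pmf])
  have "(\<integral>\<^sup>+\<omega>. indicator {\<omega>. \<forall>i<(0::nat). Q (\<omega> !! i)} \<omega> \<partial>stream_space (measure_pmf q))
      = (\<integral>\<^sup>+\<omega>. 1 \<partial>stream_space (measure_pmf q))" by simp
  also have "\<dots> = 1" using S.emeasure_space_1 by simp
  finally show ?case by simp
next
  case (Suc t)
  let ?S = "stream_space (measure_pmf q)"
  let ?c = "emeasure (measure_pmf q) {x. Q x} ^ t"
  have eq: "indicator {\<omega>. \<forall>i<Suc t. Q (\<omega> !! i)} (x ## X) = 
     (indicator {x. Q x} x :: ennreal) * indicator {\<omega>. \<forall>i<t. Q (\<omega> !! i)} X" for x X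
    by (auto simp: indicator_def less_Suc_eq_0_disj)
  have inner: "(\<integral>\<^sup>+X. indicator {\<omega>. \<forall>i<Suc t. Q (\<omega> !! i)} (x ## X) \<partial>?S) = indicator {x. Q x} x * ?c" for x
  proof -
    have "(\<integral>\<^sup>+X. indicator {\<omega>. \<forall>i<Suc t. Q (\<omega> !! i)} (x ## X) \<partial>?S)
        = (\<integral>\<^sup>+X. indicator {x. Q x} x * indicator {\<omega>. \<forall>i<t. Q (\<omega> !! i)} X \<partial>?S)"
      by (simp only: eq)
    also have "\<dots> = indicator {x. Q x} x * (\<integral>\<^sup>+X. indicator {\<omega>. \<forall>i<t. Q (\<omega> !! i)} X \<partial>?S)"
      by (rule nn_integral_cmult[OF ind_meas_gen])
    also have "\<dots> = indicator {x. Q x} x * ?c" by (simp only: Suc)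
    finally show ?thesis .
  qed
  have "(\<integral>\<^sup>+\<omega>. indicator {\<omega>. \<forall>i<Suc t. Q (\<omega> !! i)} \<omega> \<partial>?S)
     = (\<integral>\<^sup>+x. (\<integral>\<^sup>+X. indicator {\<omega>. \<forall>i<Suc t. Q (\<omega> !! i)} (x ## X) \<partial>?S) \<partial>measure_pmf q)"
    by (rule prob_space.nn_integral_stream_space[OF prob_space_measure_pmf ind_meas_gen])
  also have "\<dots> = (\<integral>\<^sup>+x. indicator {x. Q x} x * ?c \<partial>measure_pmf q)"
    by (simp only: inner)
  also have "\<dots> = (\<integral>\<^sup>+x. indicator {x. Q x} x \<partial>measure_pmf q) * ?c"
    by (rule nn_integral_multc) simp
  also have "(\<integral>\<^sup>+x. indicator {x. Q x} x \<partial>measure_pmf q) = emeasure (measure_pmf q) {x. Q x}"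
    by (rule nn_integral_indicator) simp
  also have "emeasure (measure_pmf q) {x. Q x} * ?c = emeasure (measure_pmf q) {x. Q x} ^ Suc t"
    by simp
  finally show ?case .
qed

lemma leave_set:
  assumes "(x, y) \<in> r\<^sup>*" "x \<in> S" "y \<notin> S"
  shows "\<exists>a b. (a, b) \<in> r \<and> a \<in> S \<and> b \<notin> S"
  using assms by (induction rule: rtrancl_induct) auto

lemma grow:
  assumes fin: "finite V" and v0: "v0 \<in> V" and con: "connected_on V R"
    and RV: "R \<subseteq> {e. e \<subseteq> V \<and> card e = 2}"
  shows "1 \<le> k \<Longrightarrow> k \<le> card V \<Longrightarrow> \<exists>S T. v0 \<in> S \<and> S \<subseteq> V \<and> card S = k \<and> T \<subseteq> R \<and>
     (\<forall>e\<in>T. e \<subseteq> S) \<and> finite T \<and> card T = k - 1 \<and> connected_on S T"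
proof (induction k)
  case 0
  then show ?case by simp
next
  case (Suc k)
  show ?case
  proof (cases "k = 0")
    case True
    then show ?thesis using v0
      by (intro exI[of _ "{v0}"] exI[of _ "{}"]) (auto simp: connected_on_def)
  next
    case False
    then obtain S T where ST: "v0 \<in> S" "S \<subseteq> V" "card S = k" "T \<subseteq> R"
      "\<forall>e\<in>T. e \<subseteq> S" "finite T" "card T = k - 1" "connected_on S T"
      using Suc by auto
    have "S \<noteq> V" using ST(3) Suc.prems by auto
    then obtain w where w: "w \<in> V" "w \<notin> S" using ST(2) by auto
    have vw: "(v0, w) \<in> (edge_rel R)\<^sup>*" using con v0 w(1) unfolding connected_on_def by blast
    obtain a b where ab: "(a, b) \<in> edge_rel R" "a \<in> S" "b \<notin> S"
      using leave_set[OF vw ST(1) w(2)] by blast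
    have abR: "{a, b} \<in> R" using ab(1) by (auto simp: edge_rel_def)
    have bV: "b \<in> V" using abR RV by auto
    have finS: "finite S" using ST(2) fin finite_subset by auto
    have notin: "{a, b} \<notin> T" using ST(5) ab(3) by auto
    define S' where "S' = insert b S"
    define T' where "T' = insert {a, b} T"
    have e1: "(a, b) \<in> edge_rel T'" "(b, a) \<in> edge_rel T'"
      by (auto simp: edge_rel_def T'_def insert_commute)
    have mono: "(edge_rel T)\<^sup>* \<subseteq> (edge_rel T')\<^sup>*"
      by (rule rtrancl_mono) (auto simp: edge_rel_def T'_def)
    have cS: "\<And>u v. u \<in> S \<Longrightarrow> v \<in> S \<Longrightarrow> (u, v) \<in> (edge_rel T')\<^sup>*"
      using ST(8) mono unfolding connected_on_def by blast
    have "connected_on S' T'"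
      unfolding connected_on_def S'_def
    proof (intro ballI)
      fix u v assume u: "u \<in> insert b S" and v: "v \<in> insert b S"
      have ub: "(b, v) \<in> (edge_rel T')\<^sup>*" if "v \<in> S" for v
        by (rule converse_rtrancl_into_rtrancl[OF e1(2) cS[OF ab(2) that]])
      have bu: "(v, b) \<in> (edge_rel T')\<^sup>*" if "v \<in> S" for v
        by (rule rtrancl_into_rtrancl[OF cS[OF that ab(2)] e1(1)])
      show "(u, v) \<in> (edge_rel T')\<^sup>*"
      proof (cases "u = b")
        case True
        then show ?thesis
        proof (cases "v = b")
          case True
          then show ?thesis using \<open>u = b\<close> by simp
        next
          case False
          then have "v \<in> S" using v by simp
          then show ?thesis using ub[of v] \<open>u = b\<close> by simp
        qed
      next
        case False
        then have uS: "u \<in> S" using u by simp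
        show ?thesis
        proof (cases "v = b")
          case True
          then show ?thesis using bu[OF uS] by simp
        next
          case False
          then have "v \<in> S" using v by simp
          then show ?thesis using cS[OF uS] by simp
        qed
      qed
    qed
    have g1: "v0 \<in> S'" "S' \<subseteq> V" using ST(1,2) bV unfolding S'_def by auto
    have g2: "card S' = Suc k" unfolding S'_def using finS ab(3) ST(3) by simp
    have g3: "T' \<subseteq> R" unfolding T'_def using abR ST(4) by simp
    have g4: "\<forall>e\<in>T'. e \<subseteq> S'" unfolding T'_def S'_def using ST(5) ab(2) by blast
    have g5: "finite T'" unfolding T'_def using ST(6) by simp
    have g6: "card T' = Suc k - 1" unfolding T'_def using ST(6,7) notin False by simp
    show ?thesis
      using g1 g2 g3 g4 g5 g6 \<open>connected_on S' T'\<close> by blast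
  qed
qed

lemma spanning_exists:
  assumes fin: "finite V" and ne: "V \<noteq> {}" and con: "connected_on V R"
    and RV: "R \<subseteq> {e. e \<subseteq> V \<and> card e = 2}"
  shows "\<exists>T \<subseteq> R. spanning_tree V T"
proof -
  obtain v0 where v0: "v0 \<in> V" using ne by auto
  have "1 \<le> card V" using fin ne by (simp add: Suc_leI card_gt_0_iff)
  then have "\<exists>S T. v0 \<in> S \<and> S \<subseteq> V \<and> card S = card V \<and> T \<subseteq> R \<and>
     (\<forall>e\<in>T. e \<subseteq> S) \<and> finite T \<and> card T = card V - 1 \<and> connected_on S T"
    by (rule grow[OF fin v0 con RV]) simp
  then obtain S T where ST: "v0 \<in> S" "S \<subseteq> V" "card S = card V" "T \<subseteq> R"
      "\<forall>e\<in>T. e \<subseteq> S" "finite T" "card T = card V - 1" "connected_on S T"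
    by blast
  have SV: "S = V" using ST(2,3) fin by (simp add: card_subset_eq)
  have TV: "T \<subseteq> {e. e \<subseteq> V \<and> card e = 2}" using ST(4) RV by (rule subset_trans)
  have "spanning_tree V T" unfolding spanning_tree_def using ST(6,7,8) TV SV by simp
  then show ?thesis using ST(4) by blast
qed


lemma series_bound:
  fixes n :: real
  assumes n: "1 \<le> n"
  shows "(\<Sum>t. ennreal (min 1 (n * (1/2)^t))) \<le> ennreal (log 2 n + 3)"
proof -
  define k where "k = nat \<lceil>log 2 n\<rceil>"
  have lg0: "0 \<le> log 2 n" using n by simp
  have kk: "real k = real_of_int \<lceil>log 2 n\<rceil>" using lg0 unfolding k_def by simp
  have k1: "n \<le> 2^k"
  proof -
    have "n = 2 powr log 2 n" using n by simp
    also have "\<dots> \<le> 2 powr real k" using kk by (intro powr_mono) auto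
    also have "\<dots> = 2^k" by (simp add: powr_realpow)
    finally show ?thesis .
  qed
  have k2: "real k \<le> log 2 n + 1" using kk by linarith
  define h where "h t = min 1 (n * (1/2)^t)" for t :: nat
  define b where "b t = (if t < k then 1 else (1/2::real)^(t-k))" for t :: nat
  have hb: "h t \<le> b t" for t
  proof (cases "t < k")
    case True then show ?thesis by (simp add: h_def b_def)
  next
    case False
    have "(2::real)^t = 2^(t-k) * 2^k" using False by (simp add: power_add[symmetric])
    then have e: "2^k * (1/2::real)^t = (1/2)^(t-k)" by (simp add: power_one_over)
    have "n * (1/2)^t \<le> 2^k * (1/2::real)^t" using k1 by (intro mult_right_mono) auto
    then have "n * (1/2)^t \<le> (1/2::real)^(t-k)" using e by simp
    moreover have "h t \<le> n * (1/2)^t" by (simp add: h_def)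
    moreover have "b t = (1/2)^(t-k)" using False by (simp add: b_def)
    ultimately show ?thesis by linarith
  qed
  have part: "(\<Sum>t<N. b t) \<le> real (min N k) + 2 - 2*(1/2)^(N-k)" for N
  proof (induction N)
    case 0 then show ?case by simp
  next
    case (Suc N)
    have sS: "(\<Sum>t<Suc N. b t) = (\<Sum>t<N. b t) + b N" by (rule sum.lessThan_Suc)
    show ?case
    proof (cases "N < k")
      case True
      then have a: "N - k = 0" "Suc N - k = 0" "min N k = N" "min (Suc N) k = Suc N" "b N = 1"
        by (auto simp: b_def)
      show ?thesis using Suc.IH unfolding sS a by simp
    next
      case False
      then have a: "Suc N - k = Suc (N - k)" "min N k = k" "min (Suc N) k = k" "b N = (1/2)^(N-k)"
        by (auto simp: b_def)
      have c: "(1/2::real)^(Suc (N-k)) = (1/2) * (1/2)^(N-k)" by simp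
      show ?thesis using Suc.IH unfolding sS a c by linarith
    qed
  qed
  have hpart: "(\<Sum>t<N. h t) \<le> real k + 2" for N
  proof -
    have "(\<Sum>t<N. h t) \<le> (\<Sum>t<N. b t)" by (intro sum_mono hb)
    also have "\<dots> \<le> real k + 2" proof -
      have "real (min N k) \<le> real k" by simp
      moreover have "0 \<le> 2*(1/2::real)^(N-k)" by simp
      ultimately show ?thesis using part[of N] by linarith
    qed
    finally show ?thesis .
  qed
  have h0: "0 \<le> h t" for t using n by (simp add: h_def)
  have sh: "summable h"
  proof (rule summable_comparison_test)
    show "\<exists>N. \<forall>t\<ge>N. norm (h t) \<le> n * (1/2)^t" using h0 by (auto simp: h_def)
    show "summable (\<lambda>t. n * (1/2::real)^t)" by (intro summable_mult summable_geometric) simp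
  qed
  have "(\<Sum>t. ennreal (h t)) = ennreal (\<Sum>t. h t)" by (rule suminf_ennreal2[OF h0 sh])
  also have "\<dots> \<le> ennreal (log 2 n + 3)"
    using suminf_le_const[OF sh hpart] k2 by (intro ennreal_leI) linarith
  finally show ?thesis by (simp add: h_def)
qed



theorem lemma4:
  fixes p :: real
  assumes "0 \<le> p" and "p < 1/2"
  shows "\<exists>C::real. \<forall>(V::'a set) E R.
           graph V E \<and> card V \<ge> 2 \<and> R \<subseteq> E \<and> connected_on V R \<longrightarrow>
             (AE \<omega> in naive_space E R p.
                (\<exists>t. \<exists>T \<subseteq> yes_edges E \<omega> t. spanning_tree V T) \<and>
                (\<forall>T \<subseteq> yes_edges E \<omega> (stop_round V E \<omega>). spanning_tree V T \<longrightarrow> T \<subseteq> R))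
           \<and> (\<integral>\<^sup>+ \<omega>. ennreal (real (naive_queries V E \<omega>)) \<partial>naive_space E R p)
               \<le> ennreal (C * real (card E) * ln (real (card V)))"
proof -
  note p0 = assms(1) and p2 = assms(2)
  define C where "C = 4 / ln (2::real)"
  show ?thesis
  proof (intro exI[of _ C] allI impI)
    fix V :: "'a set" and E R
    assume H: "graph V E \<and> 2 \<le> card V \<and> R \<subseteq> E \<and> connected_on V R"
    then have finV: "finite V" and EV: "E \<subseteq> {e. e \<subseteq> V \<and> card e = 2}" and n2: "2 \<le> card V"
      and RE: "R \<subseteq> E" and con: "connected_on V R"
      by (auto simp: graph_def)
    have finE: "finite E"
    proof -
      have "E \<subseteq> Pow V" using EV by auto
      then show ?thesis using finV by (simp add: finite_subset)
    qed
    have Vne: "V \<noteq> {}" using n2 by auto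
    obtain T0 where T0R: "T0 \<subseteq> R" and T0sp: "spanning_tree V T0"
      using spanning_exists[OF finV Vne con] RE EV by blast
    have finT0: "finite T0" and cT0: "card T0 = card V - 1" using T0sp by (auto simp: spanning_tree_def)
    have T0ne: "T0 \<noteq> {}" using cT0 n2 by auto
    have cT0V: "card T0 \<le> card V" using cT0 by simp
    define q where "q = round_pmf E R p"
    define S where "S = stream_space (measure_pmf q)"
    have Seq: "naive_space E R p = S" by (simp add: naive_space_def S_def q_def)
    interpret S: prob_space S
      unfolding S_def by (rule prob_space.prob_space_stream_space[OF prob_space_measure_pmf])
    have setq: "\<not> f e" if "f \<in> set_pmf q" "e \<notin> R" for f e
      using that finE unfolding q_def round_pmf_def
      by (auto simp: set_Pi_pmf PiE_dflt_def split: if_splits)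
    have pe: "emeasure (measure_pmf q) {x. \<not> x e} = ennreal p" if e: "e \<in> R" for e
    proof -
      have "emeasure (measure_pmf q) {x. \<not> x e} = emeasure (measure_pmf (map_pmf (\<lambda>f. f e) q)) {False}"
        by (simp add: map_pmf_rep_eq emeasure_distr vimage_def)
      also have "map_pmf (\<lambda>f. f e) q = bernoulli_pmf (1 - p)"
        using e RE finE unfolding q_def round_pmf_def by (auto simp: Pi_pmf_component)
      also have "emeasure (measure_pmf (bernoulli_pmf (1 - p))) {False} = ennreal p"
        using p0 p2 by (simp add: emeasure_pmf_single)
      finally show ?thesis .
    qed
    have tail: "(\<integral>\<^sup>+\<omega>. indicator {\<omega>. \<forall>i<t. \<not> (\<omega> !! i) e} \<omega> \<partial>S) = ennreal p ^ t" if "e \<in> R" for e t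
      using stream_tail[where q=q and Q="\<lambda>x. \<not> x e" and t=t] pe[OF that] unfolding S_def by simp
    define g where "g t \<omega> = min 1 (\<Sum>e\<in>T0. indicator {\<omega>. \<forall>i<t. \<not> (\<omega> !! i) e} \<omega> :: ennreal)"
      for t \<omega>
    have ind_meas: "(\<lambda>\<omega>. indicator {\<omega>. \<forall>i<t. \<not> (\<omega> !! i) e} \<omega> :: ennreal) \<in> borel_measurable S" for t e
      unfolding S_def by (rule ind_meas_gen)
    have gmeas: "g t \<in> borel_measurable S" for t
      unfolding g_def by (intro borel_measurable_min borel_measurable_const borel_measurable_sum ind_meas)
    have gint: "integral\<^sup>N S (g t) \<le> ennreal (min 1 (real (card V) * (1/2)^t))" for t
    proof -
      have a: "integral\<^sup>N S (g t) \<le> 1"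
      proof -
        have "integral\<^sup>N S (g t) \<le> (\<integral>\<^sup>+\<omega>. 1 \<partial>S)" by (intro nn_integral_mono) (simp add: g_def)
        also have "\<dots> = 1" using S.emeasure_space_1 by simp
        finally show ?thesis .
      qed
      have b: "integral\<^sup>N S (g t) \<le> ennreal (real (card V) * (1/2)^t)"
      proof -
        have "integral\<^sup>N S (g t) \<le> (\<integral>\<^sup>+\<omega>. (\<Sum>e\<in>T0. indicator {\<omega>. \<forall>i<t. \<not> (\<omega> !! i) e} \<omega>) \<partial>S)"
          by (intro nn_integral_mono) (simp add: g_def)
        also have "\<dots> = (\<Sum>e\<in>T0. (\<integral>\<^sup>+\<omega>. indicator {\<omega>. \<forall>i<t. \<not> (\<omega> !! i) e} \<omega> \<partial>S))"
          by (rule nn_integral_sum) (rule ind_meas)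
        also have "\<dots> = (\<Sum>e\<in>T0. ennreal p ^ t)"
        proof (rule sum.cong[OF refl])
          fix e assume "e \<in> T0"
          then have "e \<in> R" using T0R by blast
          then show "(\<integral>\<^sup>+\<omega>. indicator {\<omega>. \<forall>i<t. \<not> (\<omega> !! i) e} \<omega> \<partial>S) = ennreal p ^ t" by (rule tail)
        qed
        also have "\<dots> = ennreal (real (card T0) * p ^ t)"
          using p0 by (simp add: ennreal_power ennreal_mult ennreal_of_nat_eq_real_of_nat)
        also have "\<dots> \<le> ennreal (real (card V) * (1/2)^t)"
          using p0 p2 cT0V by (intro ennreal_leI mult_mono power_mono) auto
        finally show ?thesis .
      qed
      show ?thesis
      proof (cases "1 \<le> real (card V) * (1/2)^t")
        case True then show ?thesis using a by (simp add: min_def)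
      next
        case False then show ?thesis using b by (simp add: min_def)
      qed
    qed
    have gone: "g t \<omega> = 1" if ex: "\<exists>e\<in>T0. \<forall>i<t. \<not> (\<omega> !! i) e" for t \<omega>
    proof -
      obtain e where e: "e \<in> T0" "\<forall>i<t. \<not> (\<omega> !! i) e" using ex by blast
      have "(indicator {\<omega>. \<forall>i<t. \<not> (\<omega> !! i) e} \<omega> :: ennreal)
          \<le> (\<Sum>e\<in>T0. indicator {\<omega>. \<forall>i<t. \<not> (\<omega> !! i) e} \<omega>)"
        by (rule member_le_sum[OF e(1) _ finT0]) simp
      then have "1 \<le> (\<Sum>e\<in>T0. indicator {\<omega>. \<forall>i<t. \<not> (\<omega> !! i) e} \<omega> :: ennreal)"
        using e(2) by simp
      then show ?thesis unfolding g_def by (simp add: min_def)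
    qed
    have sumN: "of_nat N \<le> (\<Sum>t. g t \<omega>)" if "\<forall>t<N. g t \<omega> = 1" for N \<omega>
    proof -
      have "(of_nat N :: ennreal) = (\<Sum>t<N. g t \<omega>)" using that by simp
      also have "\<dots> \<le> (\<Sum>t. g t \<omega>)" by (rule sum_le_suminf) (auto intro: summableI)
      finally show ?thesis .
    qed
    have stopbound: "g t \<omega> = 1" if "t \<le> stop_round V E \<omega>" for t \<omega>
    proof (rule gone, rule ccontr)
      assume "\<not> (\<exists>e\<in>T0. \<forall>i<t. \<not> (\<omega> !! i) e)"
      then have all: "\<forall>e\<in>T0. \<exists>i<t. (\<omega> !! i) e" by auto
      have t0: "t \<noteq> 0" using all T0ne by auto
      have "T0 \<subseteq> yes_edges E \<omega> (t - 1)"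
      proof
        fix e assume eT: "e \<in> T0"
        then obtain i where i: "i < t" "(\<omega> !! i) e" using all by blast
        have "i \<le> t - 1" using i(1) by simp
        moreover have "e \<in> E" using eT T0R RE by blast
        ultimately show "e \<in> yes_edges E \<omega> (t - 1)" unfolding yes_edges_def using i(2) by blast
      qed
      then have "stop_round V E \<omega> \<le> t - 1"
        unfolding stop_round_def using T0sp by (intro Least_le) blast
      then show False using that t0 by linarith
    qed
    have pw: "ennreal (real (naive_queries V E \<omega>)) \<le> of_nat (card E) * (\<Sum>t. g t \<omega>)" for \<omega>
    proof -
      have all1: "\<forall>t<stop_round V E \<omega> + 1. g t \<omega> = 1"
      proof (intro allI impI)
        fix t assume "t < stop_round V E \<omega> + 1"
        then have "t \<le> stop_round V E \<omega>" by simp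
        then show "g t \<omega> = 1" by (rule stopbound)
      qed
      have "of_nat (stop_round V E \<omega> + 1) \<le> (\<Sum>t. g t \<omega>)"
        by (rule sumN[OF all1])
      then have "of_nat (card E) * of_nat (stop_round V E \<omega> + 1) \<le> of_nat (card E) * (\<Sum>t. g t \<omega>)"
        by (rule mult_left_mono) simp
      moreover have "ennreal (real (naive_queries V E \<omega>)) = of_nat (card E) * of_nat (stop_round V E \<omega> + 1)"
      proof -
        have "ennreal (real (naive_queries V E \<omega>)) = of_nat (naive_queries V E \<omega>)"
          by (rule ennreal_of_nat_eq_real_of_nat[symmetric])
        also have "\<dots> = of_nat (card E) * of_nat (stop_round V E \<omega> + 1)"
          unfolding naive_queries_def by (rule of_nat_mult)
        finally show ?thesis .
      qed
      ultimately show ?thesis by (rule ord_eq_le_trans[rotated])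
    qed
    have Gint: "(\<integral>\<^sup>+\<omega>. (\<Sum>t. g t \<omega>) \<partial>S) \<le> ennreal (log 2 (real (card V)) + 3)"
    proof -
      have "(\<integral>\<^sup>+\<omega>. (\<Sum>t. g t \<omega>) \<partial>S) = (\<Sum>t. integral\<^sup>N S (g t))"
        by (rule nn_integral_suminf[OF gmeas])
      also have "\<dots> \<le> (\<Sum>t. ennreal (min 1 (real (card V) * (1/2)^t)))"
        by (rule suminf_le[OF gint summableI summableI])
      also have "\<dots> \<le> ennreal (log 2 (real (card V)) + 3)"
        by (rule series_bound) (use n2 in simp)
      finally show ?thesis .
    qed
    have Gmeas: "(\<lambda>\<omega>. \<Sum>t. g t \<omega>) \<in> borel_measurable S" by (rule borel_measurable_suminf_order[OF gmeas])
    have int: "(\<integral>\<^sup>+ \<omega>. ennreal (real (naive_queries V E \<omega>)) \<partial>S)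
        \<le> ennreal (C * real (card E) * ln (real (card V)))"
    proof -
      have "(\<integral>\<^sup>+ \<omega>. ennreal (real (naive_queries V E \<omega>)) \<partial>S) \<le> (\<integral>\<^sup>+\<omega>. of_nat (card E) * (\<Sum>t. g t \<omega>) \<partial>S)"
        by (intro nn_integral_mono pw)
      also have "\<dots> = of_nat (card E) * (\<integral>\<^sup>+\<omega>. (\<Sum>t. g t \<omega>) \<partial>S)"
        by (rule nn_integral_cmult[OF Gmeas])
      also have "\<dots> \<le> of_nat (card E) * ennreal (log 2 (real (card V)) + 3)"
        by (rule mult_left_mono[OF Gint]) simp
      also have "\<dots> = ennreal (real (card E) * (log 2 (real (card V)) + 3))"
      proof -
        have "0 \<le> log 2 (real (card V)) + 3" using n2 by simp
        then show ?thesis by (simp add: ennreal_mult ennreal_of_nat_eq_real_of_nat)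
      qed
      also have "\<dots> \<le> ennreal (C * real (card E) * ln (real (card V)))"
      proof (intro ennreal_leI)
        have l2: "0 < ln (2::real)" by simp
        have lnV: "ln 2 \<le> ln (real (card V))" using n2 by simp
        have "log 2 (real (card V)) + 3 \<le> C * ln (real (card V))"
        proof -
          have e1: "log 2 (real (card V)) = ln (real (card V)) / ln 2" by (simp add: log_def)
          have e2: "C * ln (real (card V)) = ln (real (card V)) / ln 2 + 3 * (ln (real (card V)) / ln 2)"
            unfolding C_def by (simp add: field_simps)
          have "1 \<le> ln (real (card V)) / ln 2" using l2 lnV by simp
          then show ?thesis unfolding e1 e2 by linarith
        qed
        then have m: "real (card E) * (log 2 (real (card V)) + 3) \<le> real (card E) * (C * ln (real (card V)))"
          by (rule mult_left_mono) simp
        have e3: "C * real (card E) * ln (real (card V)) = real (card E) * (C * ln (real (card V)))"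
          by (simp add: mult_ac)
        show "real (card E) * (log 2 (real (card V)) + 3) \<le> C * real (card E) * ln (real (card V))"
          unfolding e3 by (rule m)
      qed
      finally show ?thesis .
    qed
    have AEfin: "AE \<omega> in S. (\<Sum>t. g t \<omega>) \<noteq> \<infinity>"
    proof (rule nn_integral_PInf_AE[OF Gmeas])
      show "(\<integral>\<^sup>+\<omega>. (\<Sum>t. g t \<omega>) \<partial>S) \<noteq> \<infinity>"
        using le_less_trans[OF Gint ennreal_less_top] by simp
    qed
    have AEsup: "AE \<omega> in S. \<forall>i. \<forall>e. e \<notin> R \<longrightarrow> \<not> (\<omega> !! i) e"
    proof -
      have "AE \<omega> in S. stream_all (\<lambda>x. \<forall>e. e \<notin> R \<longrightarrow> \<not> x e) \<omega>"
        unfolding S_def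
        by (rule prob_space.AE_stream_all[OF prob_space_measure_pmf]) (auto intro!: AE_pmfI dest: setq)
      then show ?thesis unfolding stream_all_def by simp
    qed
    have AE: "AE \<omega> in S.
                (\<exists>t. \<exists>T \<subseteq> yes_edges E \<omega> t. spanning_tree V T) \<and>
                (\<forall>T \<subseteq> yes_edges E \<omega> (stop_round V E \<omega>). spanning_tree V T \<longrightarrow> T \<subseteq> R)"
      using AEfin AEsup
    proof eventually_elim
      case (elim \<omega>)
      have "\<exists>t. \<forall>e\<in>T0. \<exists>i<t. (\<omega> !! i) e"
      proof (rule ccontr)
        assume "\<not> ?thesis"
        then have ex: "\<exists>e\<in>T0. \<forall>i<t. \<not> (\<omega> !! i) e" for t by blast
        have g1: "g t \<omega> = 1" for t by (rule gone[OF ex])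
        have N: "of_nat N \<le> (\<Sum>t. g t \<omega>)" for N by (rule sumN) (simp add: g1)
        obtain r where r: "(\<Sum>t. g t \<omega>) = ennreal r" "0 \<le> r"
          using elim(1) by (cases "(\<Sum>t. g t \<omega>)" rule: ennreal_cases) auto
        obtain N :: nat where "r < real N" using reals_Archimedean2 by blast
        moreover have "real N \<le> r" using N[of N] r
          by (simp add: ennreal_of_nat_eq_real_of_nat ennreal_le_iff)
        ultimately show False by simp
      qed
      then obtain t where t: "\<forall>e\<in>T0. \<exists>i<t. (\<omega> !! i) e" by blast
      have "T0 \<subseteq> yes_edges E \<omega> t"
      proof
        fix e assume eT: "e \<in> T0"
        then obtain i where i: "i < t" "(\<omega> !! i) e" using t by blast
        have "i \<le> t" using i(1) by simp
        moreover have "e \<in> E" using eT T0R RE by blast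
        ultimately show "e \<in> yes_edges E \<omega> t" unfolding yes_edges_def using i(2) by blast
      qed
      moreover have YR: "yes_edges E \<omega> s \<subseteq> R" for s using elim(2) unfolding yes_edges_def by auto
      ultimately have c1: "\<exists>t. \<exists>T \<subseteq> yes_edges E \<omega> t. spanning_tree V T" using T0sp by blast
      have c2: "\<forall>T \<subseteq> yes_edges E \<omega> (stop_round V E \<omega>). spanning_tree V T \<longrightarrow> T \<subseteq> R"
        using YR[of "stop_round V E \<omega>"] by blast
      show ?case by (rule conjI[OF c1 c2])
    qed
    show "(AE \<omega> in naive_space E R p.
                (\<exists>t. \<exists>T \<subseteq> yes_edges E \<omega> t. spanning_tree V T) \<and>
                (\<forall>T \<subseteq> yes_edges E \<omega> (stop_round V E \<omega>). spanning_tree V T \<longrightarrow> T \<subseteq> R))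
           \<and> (\<integral>\<^sup>+ \<omega>. ennreal (real (naive_queries V E \<omega>)) \<partial>naive_space E R p)
               \<le> ennreal (C * real (card E) * ln (real (card V)))"
      unfolding Seq by (rule conjI[OF AE int])
  qed
qed

end
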